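(* Let $\bm{S}\in\mathbb{R}^{m\times n}$ be $\alpha$-sparse and let $r$ be a positive integer. \begin{enumerate} \item (With replacement.) Let $\bm{R}\in\mathbb{R}^{|I|\times n}$ be the submatrix of $\bm{S}$ formed by $|I|$ rows sampled uniformly with replacement, where $|I|=cr\log(n)$ with $c\geq\frac{16}{3\alpha r}$. Then $\bm{R}$ is $2\alpha$-sparse with probability at least $1-n^{-1}$. Similarly, the submatrix $\bm{C}\in\mathbb{R}^{m\times|J|}$ formed by $|J|=cr\log(m)$ columns of $\bm{S}$ sampled uniformly with replacement is $2\alpha$-sparse with probability at least $1-m^{-1}$. \item (Without replacement.) Let $\bm{R}\in\mathbb{R}^{|I|\times n}$ be the submatrix of $\bm{S}$ formed by $|I|$ rows sampled uniformly without replacement, where $|I|=cr\log(n)$ with $c\geq\frac{8}{\alpha r}$. Then $\bm{R}$ is $2\alpha$-sparse with probability at least $1-2n^{-1}$. Similarly, the submatrix $\bm{C}\in\mathbb{R}^{m\times|J|}$ formed by $|J|=cr\log(m)$ columns of $\bm{S}$ sampled uniformly without replacement is $2\alpha$-sparse with probability at least $1-2m^{-1}$. \end{enumerate}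
   Context: A matrix $\bm{A}\in\mathbb{R}^{p\times q}$ is $\alpha$-sparse if every row of $\bm{A}$ has at most $\alpha q$ nonzero entries and every column has at most $\alpha p$ nonzero entries. $\log$ is the natural logarithm. *)

theory Defs
  imports "HOL-Probability.Probability"
begin

text \<open>A p x q real matrix is represented as a function A :: nat => nat => real,
  of which only the entries A i j with i < p, j < q matter.\<close>

definition sparse :: "nat \<Rightarrow> nat \<Rightarrow> real \<Rightarrow> (nat \<Rightarrow> nat \<Rightarrow> real) \<Rightarrow> bool" where
  "sparse p q \<alpha> A \<longleftrightarrow>
     (\<forall>i<p. real (card {j. j < q \<and> A i j \<noteq> 0}) \<le> \<alpha> * real q) \<and>
     (\<forall>j<q. real (card {i. i < p \<and> A i j \<noteq> 0}) \<le> \<alpha> * real p)"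

definition row_sub :: "(nat \<Rightarrow> nat \<Rightarrow> real) \<Rightarrow> (nat \<Rightarrow> nat) \<Rightarrow> nat \<Rightarrow> nat \<Rightarrow> real" where
  "row_sub S f = (\<lambda>i j. S (f i) j)"

definition col_sub :: "(nat \<Rightarrow> nat \<Rightarrow> real) \<Rightarrow> (nat \<Rightarrow> nat) \<Rightarrow> nat \<Rightarrow> nat \<Rightarrow> real" where
  "col_sub S g = (\<lambda>i j. S i (g j))"

definition sample_with :: "nat \<Rightarrow> nat \<Rightarrow> (nat \<Rightarrow> nat) pmf" where
  "sample_with k N = pmf_of_set ({..<k} \<rightarrow>\<^sub>E {..<N})"

definition sample_without :: "nat \<Rightarrow> nat \<Rightarrow> (nat \<Rightarrow> nat) pmf" where
  "sample_without k N = pmf_of_set {f \<in> {..<k} \<rightarrow>\<^sub>E {..<N}. inj_on f {..<k}}"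

end

theory Submission
  imports Defs "HOL-Analysis.Harmonic_Numbers"
begin

lemma ln2_ge: "11/16 \<le> ln (2::real)"
proof -
  from ln_approx_bounds[of 2 3] have "ln (2::real) \<in> {307/443..}"
    by (simp add: eval_nat_numeral)
  then show ?thesis by simp
qed

lemma card_injs:
  assumes "finite K" "finite B"
  shows "card {f \<in> K \<rightarrow>\<^sub>E B. inj_on f K} = (\<Prod>i<card K. card B - i)"
  using assms
proof (induction K arbitrary: B rule: finite_induct)
  case empty
  then show ?case by (simp add: PiE_empty_domain)
next
  case (insert x K)
  let ?D = "{(y, g). y \<in> B \<and> g \<in> K \<rightarrow>\<^sub>E (B - {y}) \<and> inj_on g K}"
  have eq: "{f \<in> insert x K \<rightarrow>\<^sub>E B. inj_on f (insert x K)} = (\<lambda>(y, g). g(x:=y)) ` ?D"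
    using extensional_funcset_extend_domain_inj_on_eq[OF insert(2)] by simp
  have D: "?D = Sigma B (\<lambda>y. {g \<in> K \<rightarrow>\<^sub>E (B - {y}). inj_on g K})" by auto
  have "card {f \<in> insert x K \<rightarrow>\<^sub>E B. inj_on f (insert x K)} = card ?D"
    unfolding eq by (rule card_image[OF extensional_funcset_extend_domain_inj_onI[OF insert(2)]])
  also have "\<dots> = (\<Sum>y\<in>B. card {g \<in> K \<rightarrow>\<^sub>E (B - {y}). inj_on g K})"
    unfolding D using insert
    by (subst card_SigmaI) (auto intro: finite_subset[OF _ finite_PiE[of K "\<lambda>_. B - {_}"]])
  also have "\<dots> = (\<Sum>y\<in>B. (\<Prod>i<card K. card B - 1 - i))"
    using insert by (intro sum.cong) auto
  also have "\<dots> = card B * (\<Prod>i<card K. card B - 1 - i)" by simp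
  also have "\<dots> = (\<Prod>i<card (insert x K). card B - i)"
    using insert by (simp del: prod.lessThan_Suc add: prod.lessThan_Suc_shift)
  finally show ?case .
qed

lemma with_sub:
  assumes "finite K" "finite B" "T \<subseteq> K" "A \<subseteq> B"
  shows "real (card {f \<in> K \<rightarrow>\<^sub>E B. f ` T \<subseteq> A}) * real (card B) ^ card T
         = real (card A) ^ card T * real (card (K \<rightarrow>\<^sub>E B))"
proof -
  have eq: "{f \<in> K \<rightarrow>\<^sub>E B. f ` T \<subseteq> A} = PiE K (\<lambda>i. if i \<in> T then A else B)"
    using assms by (auto simp: PiE_def Pi_def split: if_splits)
  have fT: "finite T" using assms finite_subset by blast
  have "card {f \<in> K \<rightarrow>\<^sub>E B. f ` T \<subseteq> A} = (\<Prod>i\<in>K. if i \<in> T then card A else card B)"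
    unfolding eq by (simp add: card_PiE assms if_distrib)
  also have "\<dots> = card A ^ card T * card B ^ card (K - T)"
    using assms by (simp add: prod.If_cases Int_absorb1 Diff_eq[symmetric] Int_commute)
  finally have c1: "card {f \<in> K \<rightarrow>\<^sub>E B. f ` T \<subseteq> A} = card A ^ card T * card B ^ card (K - T)" .
  have c2: "card (K \<rightarrow>\<^sub>E B) = card B ^ card K"
    using assms by (simp add: card_PiE)
  have "card K = card (K - T) + card T"
    using assms fT by (simp add: card_Diff_subset card_mono)
  then show ?thesis
    unfolding c1 c2 by (simp add: power_add)
qed

lemma inj_sub:
  fixes T K :: "'a set" and A B :: "'b set"
  assumes "finite T" "T \<subseteq> K" "finite K" "finite B" "A \<subseteq> B"
  shows "real (card {f \<in> K \<rightarrow>\<^sub>E B. inj_on f K \<and> f ` T \<subseteq> A}) * real (card B) ^ card T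
         \<le> real (card A) ^ card T * real (card {f \<in> K \<rightarrow>\<^sub>E B. inj_on f K})"
  using assms
proof (induction T arbitrary: K B A rule: finite_induct)
  case empty
  then show ?case by simp
next
  case (insert x T)
  define K' where "K' = K - {x}"
  have K: "K = insert x K'" using insert.prems(1) by (auto simp: K'_def)
  have xK': "x \<notin> K'" by (simp add: K'_def)
  have TK': "T \<subseteq> K'" using insert.prems(1) insert.hyps(2) by (auto simp: K'_def)
  have fK': "finite K'" using insert.prems(2) by (simp add: K'_def)
  have fA: "finite A" using insert.prems by (meson finite_subset)
  let ?h = "\<lambda>(y, g). g(x:=y)"
  let ?D = "{(y, g). y \<in> B \<and> g \<in> K' \<rightarrow>\<^sub>E (B - {y}) \<and> inj_on g K'}"
  let ?E = "{(y, g). y \<in> A \<and> g \<in> K' \<rightarrow>\<^sub>E (B - {y}) \<and> inj_on g K' \<and> g ` T \<subseteq> A - {y}}"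
  have eq0: "{f \<in> insert x K' \<rightarrow>\<^sub>E B. inj_on f (insert x K')} = ?h ` ?D"
    using extensional_funcset_extend_domain_inj_on_eq[OF xK'] by simp
  have "{f \<in> K \<rightarrow>\<^sub>E B. inj_on f K \<and> f ` insert x T \<subseteq> A}
      = {f \<in> {f \<in> insert x K' \<rightarrow>\<^sub>E B. inj_on f (insert x K')}. f ` insert x T \<subseteq> A}"
    unfolding K by auto
  also have "\<dots> = ?h ` {p \<in> ?D. ?h p ` insert x T \<subseteq> A}"
    unfolding eq0 by auto
  also have "{p \<in> ?D. ?h p ` insert x T \<subseteq> A} = ?E"
  proof (rule set_eqI)
    fix p :: "'b \<times> ('a \<Rightarrow> 'b)"
    obtain y g where p: "p = (y, g)" by fastforce
    have img: "(g(x:=y)) ` insert x T = insert y (g ` T)"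
      using insert.hyps(2) by auto
    have gT: "g ` T \<subseteq> B - {y}" if "g \<in> K' \<rightarrow>\<^sub>E (B - {y})"
      using TK' that by (auto dest: PiE_mem)
    show "p \<in> {p \<in> ?D. ?h p ` insert x T \<subseteq> A} \<longleftrightarrow> p \<in> ?E"
      unfolding p mem_Collect_eq prod.case img using gT insert.prems(4) by blast
  qed
  finally have eqL: "{f \<in> K \<rightarrow>\<^sub>E B. inj_on f K \<and> f ` insert x T \<subseteq> A} = ?h ` ?E" .
  have ED: "?E \<subseteq> ?D" using insert.prems(4) by auto
  have injE: "inj_on ?h ?E"
    by (rule inj_on_subset[OF extensional_funcset_extend_domain_inj_onI[OF xK'] ED])
  define c where "c y = card {g \<in> K' \<rightarrow>\<^sub>E (B - {y}). inj_on g K' \<and> g ` T \<subseteq> A - {y}}" for y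
  define J where "J = (\<Prod>i<card K'. card B - 1 - i)"
  have E: "?E = Sigma A (\<lambda>y. {g \<in> K' \<rightarrow>\<^sub>E (B - {y}). inj_on g K' \<and> g ` T \<subseteq> A - {y}})" by auto
  have finE: "finite {g \<in> K' \<rightarrow>\<^sub>E (B - {y}). inj_on g K' \<and> g ` T \<subseteq> A - {y}}" for y
    by (rule finite_subset[OF _ finite_PiE[of K' "\<lambda>_. B - {y}"]]) (use insert fK' in auto)
  have cardL: "card {f \<in> K \<rightarrow>\<^sub>E B. inj_on f K \<and> f ` insert x T \<subseteq> A} = (\<Sum>y\<in>A. c y)"
    unfolding eqL card_image[OF injE] unfolding E c_def using fA finE by (subst card_SigmaI) auto
  have cardR: "card {f \<in> K \<rightarrow>\<^sub>E B. inj_on f K} = card B * J"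
  proof -
    have "card {f \<in> K \<rightarrow>\<^sub>E B. inj_on f K} = (\<Prod>i<card K. card B - i)"
      by (rule card_injs) (use insert.prems in auto)
    also have "card K = Suc (card K')" using K xK' fK' by simp
    finally show ?thesis unfolding J_def
      by (simp del: prod.lessThan_Suc add: prod.lessThan_Suc_shift)
  qed
  have key: "real (c y) * real (card B) ^ card T \<le> real (card A) ^ card T * real J" if y: "y \<in> A" for y
  proof -
    have yB: "y \<in> B" using y insert by auto
    have IH: "real (c y) * real (card (B - {y})) ^ card T
        \<le> real (card (A - {y})) ^ card T * real (card {g \<in> K' \<rightarrow>\<^sub>E (B - {y}). inj_on g K'})"
      unfolding c_def by (rule insert.IH) (use insert TK' fK' in auto)
    have cJ: "card {g \<in> K' \<rightarrow>\<^sub>E (B - {y}). inj_on g K'} = J"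
      unfolding J_def using fK' insert yB by (simp add: card_injs)
    have cleJ: "c y \<le> J"
      unfolding c_def cJ[symmetric]
      by (rule card_mono) (use finite_subset[OF _ finite_PiE[of K' "\<lambda>_. B - {y}"]] fK' insert in auto)
    have aN: "card A \<le> card B" using insert.prems by (simp add: card_mono)
    have a1: "card A \<ge> 1" using y fA by (metis One_nat_def Suc_leI card_gt_0_iff empty_iff)
    show ?thesis
    proof (cases "card A = card B")
      case True
      then show ?thesis using cleJ by (simp add: mult.commute mult_right_mono)
    next
      case False
      then have lt: "card A < card B" using aN by simp
      define a where "a = real (card A)"
      define N where "N = real (card B)"
      have ca: "real (card (A - {y})) = a - 1" using y fA a_def a1 by (simp add: of_nat_diff)
      have B1: "card B \<ge> 1" using yB insert.prems(3) by (metis One_nat_def Suc_leI card_gt_0_iff empty_iff)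
      have cN: "real (card (B - {y})) = N - 1" using yB insert.prems(3) N_def B1
        by (simp add: of_nat_diff)
      have N1: "N - 1 > 0" using lt a1 a_def N_def by linarith
      have a1': "a \<ge> 1" using a1 a_def by simp
      have aN': "a \<le> N" using aN a_def N_def by simp
      have IH': "real (c y) * (N - 1) ^ card T \<le> (a - 1) ^ card T * real J"
        using IH ca cN cJ by simp
      have rat: "(a - 1) / (N - 1) \<le> a / N"
        using N1 aN' by (simp add: field_simps)
      have pos: "(N - 1) ^ card T > 0" using N1 by simp
      have "real (c y) \<le> (a - 1) ^ card T * real J / (N - 1) ^ card T"
        using IH' pos by (simp add: pos_le_divide_eq)
      also have "\<dots> = ((a - 1) / (N - 1)) ^ card T * real J"
        by (simp add: power_divide)
      also have "\<dots> \<le> (a / N) ^ card T * real J"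
        using rat a1' N1 by (intro mult_right_mono power_mono) auto
      finally have "real (c y) \<le> (a / N) ^ card T * real J" .
      then have "real (c y) * N ^ card T \<le> (a / N) ^ card T * real J * N ^ card T"
        using N1 by (intro mult_right_mono) auto
      also have "\<dots> = a ^ card T * real J"
        using N1 by (simp add: power_divide)
      finally show ?thesis unfolding a_def N_def .
    qed
  qed
  have "real (card {f \<in> K \<rightarrow>\<^sub>E B. inj_on f K \<and> f ` insert x T \<subseteq> A}) * real (card B) ^ card (insert x T)
      = real (card B) * (\<Sum>y\<in>A. real (c y) * real (card B) ^ card T)"
    unfolding cardL using insert.hyps by (simp add: sum_distrib_right mult_ac)
  also have "\<dots> \<le> real (card B) * (\<Sum>y\<in>A. real (card A) ^ card T * real J)"
    using key by (intro mult_left_mono sum_mono) auto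
  also have "\<dots> = real (card A) ^ card (insert x T) * real (card {f \<in> K \<rightarrow>\<^sub>E B. inj_on f K})"
    unfolding cardR using insert.hyps by (simp add: mult_ac)
  finally show ?case .
qed

lemma mgf:
  fixes \<Omega> :: "(nat \<Rightarrow> nat) set"
  assumes fin: "finite \<Omega>" and N: "N > 0"
    and P: "\<And>T. T \<subseteq> {..<k} \<Longrightarrow>
       real (card {f \<in> \<Omega>. f ` T \<subseteq> A}) * real N ^ card T \<le> real (card A) ^ card T * real (card \<Omega>)"
  shows "(\<Sum>f\<in>\<Omega>. (2::real) ^ card {i. i < k \<and> f i \<in> A}) \<le> (1 + real (card A) / real N) ^ k * real (card \<Omega>)"
proof -
  let ?ind = "\<lambda>f i. if f i \<in> A then (1::real) else 0"
  have e1: "(2::real) ^ card {i. i < k \<and> f i \<in> A} = (\<Prod>i<k. ?ind f i + 1)" for f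
  proof -
    have "(\<Prod>i<k. ?ind f i + 1) = (\<Prod>i<k. if f i \<in> A then 2 else 1)"
      by (intro prod.cong) auto
    also have "\<dots> = (\<Prod>i\<in>{i\<in>{..<k}. f i \<in> A}. 2)"
      by (rule prod.inter_filter[symmetric]) simp
    also have "{i\<in>{..<k}. f i \<in> A} = {i. i < k \<and> f i \<in> A}" by auto
    finally show ?thesis by simp
  qed
  have e2: "(\<Prod>i<k. ?ind f i + 1) = (\<Sum>X\<in>Pow {..<k}. if f ` X \<subseteq> A then 1 else 0)" for f
  proof -
    have "(\<Prod>i<k. ?ind f i + 1) = (\<Sum>X\<in>Pow {..<k}. (\<Prod>i\<in>X. ?ind f i) * (\<Prod>i\<in>{..<k} - X. 1))"
      by (rule prod_add) simp
    also have "\<dots> = (\<Sum>X\<in>Pow {..<k}. if f ` X \<subseteq> A then 1 else 0)"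
    proof (intro sum.cong refl)
      fix X assume X: "X \<in> Pow {..<k}"
      then have fX: "finite X" by (meson PowD finite_lessThan finite_subset)
      show "(\<Prod>i\<in>X. ?ind f i) * (\<Prod>i\<in>{..<k} - X. 1) = (if f ` X \<subseteq> A then 1 else 0)"
      proof (cases "f ` X \<subseteq> A")
        case True
        then show ?thesis by (auto intro!: prod.neutral)
      next
        case False
        then obtain i where "i \<in> X" "f i \<notin> A" by auto
        then show ?thesis using fX False by (auto intro!: prod_zero)
      qed
    qed
    finally show ?thesis .
  qed
  have "(\<Sum>f\<in>\<Omega>. (2::real) ^ card {i. i < k \<and> f i \<in> A})
      = (\<Sum>f\<in>\<Omega>. \<Sum>X\<in>Pow {..<k}. if f ` X \<subseteq> A then 1 else 0)"
    using e1 e2 by simp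
  also have "\<dots> = (\<Sum>X\<in>Pow {..<k}. \<Sum>f\<in>\<Omega>. if f ` X \<subseteq> A then 1 else 0)"
    by (rule sum.swap)
  also have "\<dots> = (\<Sum>X\<in>Pow {..<k}. real (card {f \<in> \<Omega>. f ` X \<subseteq> A}))"
  proof (intro sum.cong refl)
    fix X
    show "(\<Sum>f\<in>\<Omega>. if f ` X \<subseteq> A then 1 else 0) = real (card {f \<in> \<Omega>. f ` X \<subseteq> A})"
      by (subst sum.inter_filter[OF fin, symmetric]) simp
  qed
  also have "\<dots> \<le> (\<Sum>X\<in>Pow {..<k}. (real (card A) / real N) ^ card X * real (card \<Omega>))"
  proof (intro sum_mono)
    fix X assume "X \<in> Pow {..<k}"
    then have "real (card {f \<in> \<Omega>. f ` X \<subseteq> A}) * real N ^ card X \<le> real (card A) ^ card X * real (card \<Omega>)"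
      by (intro P) auto
    then show "real (card {f \<in> \<Omega>. f ` X \<subseteq> A}) \<le> (real (card A) / real N) ^ card X * real (card \<Omega>)"
      using N by (simp add: power_divide field_simps)
  qed
  also have "\<dots> = (\<Sum>X\<in>Pow {..<k}. (\<Prod>i\<in>X. real (card A) / real N) * (\<Prod>i\<in>{..<k} - X. 1)) * real (card \<Omega>)"
    by (simp add: sum_distrib_right)
  also have "\<dots> = (\<Prod>i<k. real (card A) / real N + 1) * real (card \<Omega>)"
    by (subst prod_add) simp_all
  also have "\<dots> = (1 + real (card A) / real N) ^ k * real (card \<Omega>)"
    by (simp add: add.commute)
  finally show ?thesis .
qed

lemma tail:
  fixes \<Omega> :: "(nat \<Rightarrow> nat) set"
  assumes fin: "finite \<Omega>" and N: "N > 0"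
    and P: "\<And>T. T \<subseteq> {..<k} \<Longrightarrow>
       real (card {f \<in> \<Omega>. f ` T \<subseteq> A}) * real N ^ card T \<le> real (card A) ^ card T * real (card \<Omega>)"
    and cA: "real (card A) \<le> \<alpha> * real N" and a0: "\<alpha> \<ge> 0"
  shows "real (card {f \<in> \<Omega>. 2 * \<alpha> * real k < real (card {i. i < k \<and> f i \<in> A})})
         \<le> exp (- (2 * ln 2 - 1) * \<alpha> * real k) * real (card \<Omega>)"
proof -
  define X where "X f = card {i. i < k \<and> f i \<in> A}" for f :: "nat \<Rightarrow> nat"
  define bad where "bad = {f \<in> \<Omega>. 2 * \<alpha> * real k < real (X f)}"
  have fb: "finite bad" using fin unfolding bad_def by simp
  have "real (card bad) * 2 powr (2 * \<alpha> * real k) = (\<Sum>f\<in>bad. 2 powr (2 * \<alpha> * real k))"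
    by simp
  also have "\<dots> \<le> (\<Sum>f\<in>bad. (2::real) ^ X f)"
  proof (intro sum_mono)
    fix f assume "f \<in> bad"
    then have "2 * \<alpha> * real k \<le> real (X f)" unfolding bad_def by simp
    then have "2 powr (2 * \<alpha> * real k) \<le> 2 powr real (X f)" by (intro powr_mono) auto
    then show "2 powr (2 * \<alpha> * real k) \<le> (2::real) ^ X f" by (simp add: powr_realpow)
  qed
  also have "\<dots> \<le> (\<Sum>f\<in>\<Omega>. (2::real) ^ X f)"
    by (intro sum_mono2 fin) (auto simp: bad_def)
  also have "\<dots> \<le> (1 + real (card A) / real N) ^ k * real (card \<Omega>)"
    unfolding X_def by (rule mgf[OF fin N P])
  also have "\<dots> \<le> exp (\<alpha> * real k) * real (card \<Omega>)"
  proof (intro mult_right_mono)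
    have "1 + real (card A) / real N \<le> exp (real (card A) / real N)" by (rule exp_ge_add_one_self)
    also have "\<dots> \<le> exp \<alpha>" using cA N by (simp add: divide_le_eq mult.commute)
    finally have "(1 + real (card A) / real N) ^ k \<le> exp \<alpha> ^ k"
      by (intro power_mono) (auto intro: add_nonneg_nonneg)
    also have "\<dots> = exp (\<alpha> * real k)" by (simp add: exp_of_nat_mult[symmetric] mult.commute)
    finally show "(1 + real (card A) / real N) ^ k \<le> exp (\<alpha> * real k)" .
  qed auto
  finally have ineq: "real (card bad) * 2 powr (2 * \<alpha> * real k) \<le> exp (\<alpha> * real k) * real (card \<Omega>)" .
  have p2: "2 powr (2 * \<alpha> * real k) = exp (2 * \<alpha> * real k * ln 2)" by (simp add: powr_def mult_ac)
  have "real (card bad) \<le> exp (\<alpha> * real k) * real (card \<Omega>) / exp (2 * \<alpha> * real k * ln 2)"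
    using ineq unfolding p2 by (simp add: pos_le_divide_eq)
  also have "\<dots> = exp (\<alpha> * real k - 2 * \<alpha> * real k * ln 2) * real (card \<Omega>)"
    by (simp add: exp_diff)
  also have "\<alpha> * real k - 2 * \<alpha> * real k * ln 2 = - (2 * ln 2 - 1) * \<alpha> * real k"
    by (simp add: algebra_simps)
  finally show ?thesis unfolding bad_def X_def .
qed

lemma good_prob:
  fixes \<Omega> :: "(nat \<Rightarrow> nat) set" and A :: "nat \<Rightarrow> nat set"
  assumes fin: "finite \<Omega>" and ne: "\<Omega> \<noteq> {}" and N: "N > 0" and M: "M > 0"
    and P: "\<And>T B. T \<subseteq> {..<k} \<Longrightarrow> B \<subseteq> {..<N} \<Longrightarrow>
       real (card {f \<in> \<Omega>. f ` T \<subseteq> B}) * real N ^ card T \<le> real (card B) ^ card T * real (card \<Omega>)"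
    and cA: "\<And>j. j < M \<Longrightarrow> A j \<subseteq> {..<N} \<and> real (card (A j)) \<le> \<alpha> * real N" and a0: "\<alpha> \<ge> 0"
    and bound: "exp (- (2 * ln 2 - 1) * \<alpha> * real k) \<le> 1 / real M ^ 2"
  shows "measure_pmf.prob (pmf_of_set \<Omega>) {f. \<forall>j<M. real (card {i. i < k \<and> f i \<in> A j}) \<le> 2 * \<alpha> * real k}
         \<ge> 1 - 1 / real M"
proof -
  define G where "G = {f. \<forall>j<M. real (card {i. i < k \<and> f i \<in> A j}) \<le> 2 * \<alpha> * real k}"
  define bad where "bad j = {f \<in> \<Omega>. 2 * \<alpha> * real k < real (card {i. i < k \<and> f i \<in> A j})}" for j
  have sub: "\<Omega> - G \<subseteq> (\<Union>j<M. bad j)" unfolding G_def bad_def by (auto simp: not_le)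
  have cb: "real (card (bad j)) \<le> real (card \<Omega>) / real M ^ 2" if "j < M" for j
  proof -
    have Pj: "real (card {f \<in> \<Omega>. f ` T \<subseteq> A j}) * real N ^ card T \<le> real (card (A j)) ^ card T * real (card \<Omega>)"
      if "T \<subseteq> {..<k}" for T using P[OF that] cA[OF \<open>j < M\<close>] by blast
    have "real (card (bad j)) \<le> exp (- (2 * ln 2 - 1) * \<alpha> * real k) * real (card \<Omega>)"
      unfolding bad_def using cA[OF that] by (intro tail[OF fin N Pj _ a0]) auto
    also have "\<dots> \<le> 1 / real M ^ 2 * real (card \<Omega>)" by (intro mult_right_mono bound) auto
    finally show ?thesis by simp
  qed
  have "real (card (\<Omega> - G)) \<le> real (card (\<Union>j<M. bad j))"
    using sub fin by (intro of_nat_mono card_mono) (auto simp: bad_def)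
  also have "\<dots> \<le> (\<Sum>j<M. real (card (bad j)))"
    using card_UN_le[of "{..<M}" bad] by (simp flip: of_nat_sum)
  also have "\<dots> \<le> (\<Sum>j<M. real (card \<Omega>) / real M ^ 2)" using cb by (intro sum_mono) auto
  also have "\<dots> = real (card \<Omega>) / real M" using M by (simp add: power2_eq_square)
  finally have c1: "real (card (\<Omega> - G)) \<le> real (card \<Omega>) / real M" .
  have cO: "real (card \<Omega>) > 0" using fin ne by (simp add: card_gt_0_iff)
  have "card \<Omega> = card (\<Omega> \<inter> G) + card (\<Omega> - G)"
    using fin by (metis Diff_Diff_Int Diff_subset card_Diff_subset card_mono finite_Diff le_add_diff_inverse2 Int_commute inf_le1)
  then have "real (card (\<Omega> \<inter> G)) = real (card \<Omega>) - real (card (\<Omega> - G))" by simp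
  then have "real (card (\<Omega> \<inter> G)) / real (card \<Omega>) \<ge> 1 - 1 / real M"
    using c1 cO by (simp add: field_simps)
  then show ?thesis unfolding G_def[symmetric] using fin ne by (simp add: measure_pmf_of_set)
qed

lemma P_with:
  fixes k N :: nat
  assumes "T \<subseteq> {..<k}" "B \<subseteq> {..<N}"
  shows "real (card {f \<in> {..<k} \<rightarrow>\<^sub>E {..<N}. f ` T \<subseteq> B}) * real N ^ card T
         \<le> real (card B) ^ card T * real (card ({..<k} \<rightarrow>\<^sub>E {..<N}))"
  using with_sub[of "{..<k}" "{..<N}" T B] assms by simp

lemma P_without:
  fixes k N :: nat
  assumes "T \<subseteq> {..<k}" "B \<subseteq> {..<N}"
  shows "real (card {f \<in> {f \<in> {..<k} \<rightarrow>\<^sub>E {..<N}. inj_on f {..<k}}. f ` T \<subseteq> B}) * real N ^ card T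
         \<le> real (card B) ^ card T * real (card {f \<in> {..<k} \<rightarrow>\<^sub>E {..<N}. inj_on f {..<k}})"
proof -
  have e: "{f \<in> {f \<in> {..<k} \<rightarrow>\<^sub>E {..<N}. inj_on f {..<k}}. f ` T \<subseteq> B}
     = {f \<in> {..<k} \<rightarrow>\<^sub>E {..<N}. inj_on f {..<k} \<and> f ` T \<subseteq> B}" by auto
  have fT: "finite T" using finite_subset[OF assms(1)] by simp
  show ?thesis unfolding e using inj_sub[OF fT assms(1) _ _ assms(2)] by simp
qed

lemma bound_exp:
  assumes a: "\<alpha> > 0" and r: "r > 0" and c: "c \<ge> L / (\<alpha> * real r)" and L: "L \<ge> 16/3"
    and k: "real k = c * real r * ln (real M)" and M: "M > 0"
  shows "exp (- (2 * ln 2 - 1) * \<alpha> * real k) \<le> 1 / real M ^ 2"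
proof -
  have lnM: "ln (real M) \<ge> 0" using M by simp
  have ar: "\<alpha> * real r > 0" using a r by simp
  have "L \<le> c * (\<alpha> * real r)" using c ar by (simp add: pos_divide_le_eq)
  moreover have "c * (\<alpha> * real r) = \<alpha> * c * real r" by (simp add: mult_ac)
  ultimately have acr: "16/3 \<le> \<alpha> * c * real r" using L by linarith
  have ak0: "\<alpha> * real k = (\<alpha> * c * real r) * ln (real M)" by (simp add: k mult_ac)
  have ak: "\<alpha> * real k \<ge> 16/3 * ln (real M)"
    unfolding ak0 by (rule mult_right_mono[OF acr lnM])
  have l2: "2 * ln 2 - 1 \<ge> (3/8::real)" using ln2_ge by linarith
  have akp: "\<alpha> * real k \<ge> 0" using ak lnM by linarith
  have "(3/8) * (\<alpha> * real k) \<le> (2 * ln 2 - 1) * (\<alpha> * real k)"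
    by (rule mult_right_mono[OF l2 akp])
  moreover have "2 * ln (real M) \<le> (3/8) * (\<alpha> * real k)" using ak by linarith
  moreover have "- (2 * ln 2 - 1) * \<alpha> * real k = - ((2 * ln 2 - 1) * (\<alpha> * real k))" by (simp only: mult.assoc mult_minus_left)
  ultimately have "- (2 * ln 2 - 1) * \<alpha> * real k \<le> - 2 * ln (real M)" by linarith
  then have "exp (- (2 * ln 2 - 1) * \<alpha> * real k) \<le> exp (- 2 * ln (real M))" by (rule exp_mono)
  also have "exp (- 2 * ln (real M)) = inverse (exp (2 * ln (real M)))"
    by (simp only: mult_minus_left exp_minus)
  also have "exp (2 * ln (real M)) = real M ^ 2"
  proof -
    have "exp (2 * ln (real M)) = exp (ln (real M)) * exp (ln (real M))"
      by (simp only: mult_2 exp_add)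
    also have "exp (ln (real M)) = real M" using M by simp
    finally show ?thesis by (simp only: power2_eq_square)
  qed
  also have "inverse (real M ^ 2) = 1 / real M ^ 2" by (simp only: inverse_eq_divide)
  finally show ?thesis .
qed

lemma rows_gen:
  fixes \<Omega> :: "(nat \<Rightarrow> nat) set"
  assumes sp: "sparse m n \<alpha> S" and a: "\<alpha> > 0" and m: "m > 0" and n: "n > 0"
    and fin: "finite \<Omega>" and ne: "\<Omega> \<noteq> {}" and sub: "\<Omega> \<subseteq> {..<k} \<rightarrow>\<^sub>E {..<m}"
    and P: "\<And>T B. T \<subseteq> {..<k} \<Longrightarrow> B \<subseteq> {..<m} \<Longrightarrow>
       real (card {f \<in> \<Omega>. f ` T \<subseteq> B}) * real m ^ card T \<le> real (card B) ^ card T * real (card \<Omega>)"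
    and bound: "exp (- (2 * ln 2 - 1) * \<alpha> * real k) \<le> 1 / real n ^ 2"
  shows "measure_pmf.prob (pmf_of_set \<Omega>) {f. sparse k n (2 * \<alpha>) (row_sub S f)} \<ge> 1 - 1 / real n"
proof -
  define A where "A j = {i. i < m \<and> S i j \<noteq> 0}" for j
  define G where "G = {f. \<forall>j<n. real (card {i. i < k \<and> f i \<in> A j}) \<le> 2 * \<alpha> * real k}"
  have cA: "A j \<subseteq> {..<m} \<and> real (card (A j)) \<le> \<alpha> * real m" if "j < n" for j
    using sp that unfolding sparse_def A_def by auto
  have g: "measure_pmf.prob (pmf_of_set \<Omega>) G \<ge> 1 - 1 / real n"
    unfolding G_def by (rule good_prob[OF fin ne m n P cA _ bound]) (use a in auto)
  have inc: "G \<inter> \<Omega> \<subseteq> {f. sparse k n (2 * \<alpha>) (row_sub S f)}"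
  proof
    fix f assume f: "f \<in> G \<inter> \<Omega>"
    then have fm: "\<And>i. i < k \<Longrightarrow> f i < m" using sub by (auto dest: PiE_mem)
    have rows: "real (card {j. j < n \<and> row_sub S f i j \<noteq> 0}) \<le> 2 * \<alpha> * real n" if "i < k" for i
    proof -
      have "real (card {j. j < n \<and> S (f i) j \<noteq> 0}) \<le> \<alpha> * real n"
        using sp fm[OF that] unfolding sparse_def by auto
      then show ?thesis using a n by (simp add: row_sub_def)
    qed
    have cols: "real (card {i. i < k \<and> row_sub S f i j \<noteq> 0}) \<le> 2 * \<alpha> * real k" if "j < n" for j
    proof -
      have "{i. i < k \<and> row_sub S f i j \<noteq> 0} = {i. i < k \<and> f i \<in> A j}"
        using fm by (auto simp: row_sub_def A_def)
      then show ?thesis using f that unfolding G_def by auto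
    qed
    show "f \<in> {f. sparse k n (2 * \<alpha>) (row_sub S f)}"
      using rows cols unfolding sparse_def by auto
  qed
  have "measure_pmf.prob (pmf_of_set \<Omega>) G = measure_pmf.prob (pmf_of_set \<Omega>) (G \<inter> \<Omega>)"
    using measure_Int_set_pmf[of "pmf_of_set \<Omega>" G] fin ne by simp
  also have "\<dots> \<le> measure_pmf.prob (pmf_of_set \<Omega>) {f. sparse k n (2 * \<alpha>) (row_sub S f)}"
    by (rule measure_pmf.finite_measure_mono[OF inc]) simp
  finally show ?thesis using g by linarith
qed

lemma cols_gen:
  fixes \<Omega> :: "(nat \<Rightarrow> nat) set"
  assumes sp: "sparse m n \<alpha> S" and a: "\<alpha> > 0" and m: "m > 0" and n: "n > 0"
    and fin: "finite \<Omega>" and ne: "\<Omega> \<noteq> {}" and sub: "\<Omega> \<subseteq> {..<k} \<rightarrow>\<^sub>E {..<n}"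
    and P: "\<And>T B. T \<subseteq> {..<k} \<Longrightarrow> B \<subseteq> {..<n} \<Longrightarrow>
       real (card {f \<in> \<Omega>. f ` T \<subseteq> B}) * real n ^ card T \<le> real (card B) ^ card T * real (card \<Omega>)"
    and bound: "exp (- (2 * ln 2 - 1) * \<alpha> * real k) \<le> 1 / real m ^ 2"
  shows "measure_pmf.prob (pmf_of_set \<Omega>) {g. sparse m k (2 * \<alpha>) (col_sub S g)} \<ge> 1 - 1 / real m"
proof -
  define A where "A i = {j. j < n \<and> S i j \<noteq> 0}" for i
  define G where "G = {f. \<forall>j<m. real (card {i. i < k \<and> f i \<in> A j}) \<le> 2 * \<alpha> * real k}"
  have cA: "A j \<subseteq> {..<n} \<and> real (card (A j)) \<le> \<alpha> * real n" if "j < m" for j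
    using sp that unfolding sparse_def A_def by auto
  have g: "measure_pmf.prob (pmf_of_set \<Omega>) G \<ge> 1 - 1 / real m"
    unfolding G_def by (rule good_prob[OF fin ne n m P cA _ bound]) (use a in auto)
  have inc: "G \<inter> \<Omega> \<subseteq> {g. sparse m k (2 * \<alpha>) (col_sub S g)}"
  proof
    fix f assume f: "f \<in> G \<inter> \<Omega>"
    then have fm: "\<And>i. i < k \<Longrightarrow> f i < n" using sub by (auto dest: PiE_mem)
    have cols: "real (card {i. i < m \<and> col_sub S f i j \<noteq> 0}) \<le> 2 * \<alpha> * real m" if "j < k" for j
    proof -
      have "real (card {i. i < m \<and> S i (f j) \<noteq> 0}) \<le> \<alpha> * real m"
        using sp fm[OF that] unfolding sparse_def by auto
      then show ?thesis using a m by (simp add: col_sub_def)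
    qed
    have rows: "real (card {j. j < k \<and> col_sub S f i j \<noteq> 0}) \<le> 2 * \<alpha> * real k" if "i < m" for i
    proof -
      have "{j. j < k \<and> col_sub S f i j \<noteq> 0} = {j. j < k \<and> f j \<in> A i}"
        using fm by (auto simp: col_sub_def A_def)
      then show ?thesis using f that unfolding G_def by auto
    qed
    show "f \<in> {g. sparse m k (2 * \<alpha>) (col_sub S g)}"
      using rows cols unfolding sparse_def by auto
  qed
  have "measure_pmf.prob (pmf_of_set \<Omega>) G = measure_pmf.prob (pmf_of_set \<Omega>) (G \<inter> \<Omega>)"
    using measure_Int_set_pmf[of "pmf_of_set \<Omega>" G] fin ne by simp
  also have "\<dots> \<le> measure_pmf.prob (pmf_of_set \<Omega>) {g. sparse m k (2 * \<alpha>) (col_sub S g)}"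
    by (rule measure_pmf.finite_measure_mono[OF inc]) simp
  finally show ?thesis using g by linarith
qed

theorem proposition4p5:
  fixes m n :: nat and S :: "nat \<Rightarrow> nat \<Rightarrow> real" and \<alpha> :: real
  assumes "0 < m" and "0 < n" and "0 < \<alpha>"
    and "sparse m n \<alpha> S"
  shows
   "(\<forall>(r::nat) (c::real) (k::nat). 0 < r \<longrightarrow> c \<ge> 16 / (3 * \<alpha> * real r) \<longrightarrow>
        real k = c * real r * ln (real n) \<longrightarrow>
        measure_pmf.prob (sample_with k m) {f. sparse k n (2 * \<alpha>) (row_sub S f)}
          \<ge> 1 - 1 / real n)
  \<and> (\<forall>(r::nat) (c::real) (k::nat). 0 < r \<longrightarrow> c \<ge> 16 / (3 * \<alpha> * real r) \<longrightarrow>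
        real k = c * real r * ln (real m) \<longrightarrow>
        measure_pmf.prob (sample_with k n) {g. sparse m k (2 * \<alpha>) (col_sub S g)}
          \<ge> 1 - 1 / real m)
  \<and> (\<forall>(r::nat) (c::real) (k::nat). 0 < r \<longrightarrow> c \<ge> 8 / (\<alpha> * real r) \<longrightarrow>
        real k = c * real r * ln (real n) \<longrightarrow> k \<le> m \<longrightarrow>
        measure_pmf.prob (sample_without k m) {f. sparse k n (2 * \<alpha>) (row_sub S f)}
          \<ge> 1 - 2 / real n)
  \<and> (\<forall>(r::nat) (c::real) (k::nat). 0 < r \<longrightarrow> c \<ge> 8 / (\<alpha> * real r) \<longrightarrow>
        real k = c * real r * ln (real m) \<longrightarrow> k \<le> n \<longrightarrow>
        measure_pmf.prob (sample_without k n) {g. sparse m k (2 * \<alpha>) (col_sub S g)}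
          \<ge> 1 - 2 / real m)"
proof -
  note sp = assms(4) and a = assms(3) and m = assms(1) and n = assms(2)
  have nonemp: "(\<lambda>i\<in>{..<k}. i) \<in> {f \<in> {..<k} \<rightarrow>\<^sub>E {..<N}. inj_on f {..<k}}" if "k \<le> N" for k N :: nat
    using that by auto
  have ne2: "{f \<in> {..<k} \<rightarrow>\<^sub>E {..<N}. inj_on f {..<k}} \<noteq> {}" if "k \<le> N" for k N :: nat
    using nonemp[OF that] by (metis empty_iff)
  have sub2: "{f \<in> {..<k} \<rightarrow>\<^sub>E {..<N}. inj_on f {..<k}} \<subseteq> {..<k} \<rightarrow>\<^sub>E {..<N}" for k N :: nat
    by blast
  have L8: "(16/3::real) \<le> 8" by simp
  have finI: "finite {f \<in> {..<k} \<rightarrow>\<^sub>E {..<N}. inj_on f {..<k}}" for k N :: nat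
    by (rule finite_subset[OF _ finite_PiE[of "{..<k}" "\<lambda>_. {..<N}"]]) auto
  have neP: "{..<k} \<rightarrow>\<^sub>E {..<N} \<noteq> {}" if "N > 0" for k N :: nat
    using that by (simp add: PiE_eq_empty_iff lessThan_empty_iff)
  have c1: "c \<ge> (16/3) / (\<alpha> * real r)" if "c \<ge> 16 / (3 * \<alpha> * real r)" for c r
  proof -
    have "(16/3) / (\<alpha> * real r) = 16 / (3 * \<alpha> * real r)"
      by (simp add: divide_divide_eq_left mult.assoc)
    then show ?thesis using that by simp
  qed
  show ?thesis
  proof (intro conjI allI impI)
    fix r :: nat and c :: real and k :: nat
    assume r: "0 < r" and c: "16 / (3 * \<alpha> * real r) \<le> c" and k: "real k = c * real r * ln (real n)"
    show "measure_pmf.prob (sample_with k m) {f. sparse k n (2 * \<alpha>) (row_sub S f)} \<ge> 1 - 1 / real n"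
      unfolding sample_with_def
      by (rule rows_gen[OF sp a m n finite_PiE neP[OF m] _ P_with bound_exp[OF a r c1[OF c] _ k n]]) auto
  next
    fix r :: nat and c :: real and k :: nat
    assume r: "0 < r" and c: "16 / (3 * \<alpha> * real r) \<le> c" and k: "real k = c * real r * ln (real m)"
    show "measure_pmf.prob (sample_with k n) {g. sparse m k (2 * \<alpha>) (col_sub S g)} \<ge> 1 - 1 / real m"
      unfolding sample_with_def
      by (rule cols_gen[OF sp a m n finite_PiE neP[OF n] _ P_with bound_exp[OF a r c1[OF c] _ k m]]) auto
  next
    fix r :: nat and c :: real and k :: nat
    assume r: "0 < r" and c: "8 / (\<alpha> * real r) \<le> c" and k: "real k = c * real r * ln (real n)"
      and km: "k \<le> m"
    have "measure_pmf.prob (sample_without k m) {f. sparse k n (2 * \<alpha>) (row_sub S f)} \<ge> 1 - 1 / real n"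
      unfolding sample_without_def
      by (rule rows_gen[OF sp a m n finI _ _ P_without bound_exp[OF a r c L8 k n]])
        (fact ne2[OF km], fact sub2)
    moreover have "1 - 2 / real n \<le> 1 - 1 / real n" using n by (simp add: divide_right_mono)
    ultimately show "measure_pmf.prob (sample_without k m) {f. sparse k n (2 * \<alpha>) (row_sub S f)} \<ge> 1 - 2 / real n"
      by linarith
  next
    fix r :: nat and c :: real and k :: nat
    assume r: "0 < r" and c: "8 / (\<alpha> * real r) \<le> c" and k: "real k = c * real r * ln (real m)"
      and kn: "k \<le> n"
    have "measure_pmf.prob (sample_without k n) {g. sparse m k (2 * \<alpha>) (col_sub S g)} \<ge> 1 - 1 / real m"
      unfolding sample_without_def
      by (rule cols_gen[OF sp a m n finI _ _ P_without bound_exp[OF a r c L8 k m]])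
        (fact ne2[OF kn], fact sub2)
    moreover have "1 - 2 / real m \<le> 1 - 1 / real m" using m by (simp add: divide_right_mono)
    ultimately show "measure_pmf.prob (sample_without k n) {g. sparse m k (2 * \<alpha>) (col_sub S g)} \<ge> 1 - 2 / real m"
      by linarith
  qed
qed


end
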